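(* Let $\mathcal{S}_{reb}\subset\mathbb{R}^3$ be the rebit state space. Then $$\sup\,\bar P(\mathsf{M}^{(1)},\mathsf{M}^{(2)})=\frac12\Big(1+\frac{1}{\sqrt2}\Big),$$ where the supremum ranges over all pairs of dichotomic measurements on $\mathcal{S}_{reb}$, and the supremum is attained.
   Context: The rebit state space is $\mathcal{S}_{reb}=\{(x,y,1)^T : x^2+y^2\le1\}$, whose pure states are $s_\theta=(\cos\theta,\sin\theta,1)^T$. Effects are linear functionals $e$ on $\mathbb{R}^3$ with $0\le e\le1$ on $\mathcal{S}_{reb}$; unit effect $u=(0,0,1)$ (acting by dot product); $\|f\|=\max_{s\in\mathcal{S}_{reb}}|f(s)|$. A dichotomic measurement is a pair of effects $\mathsf{M}_+,\mathsf{M}_-$ with $\mathsf{M}_++\mathsf{M}_-=u$, and $\bar P(\mathsf{M}^{(1)},\mathsf{M}^{(2)})=\frac18\sum_{x,y\in\{+,-\}}\|\mathsf{M}^{(1)}_x+\mathsf{M}^{(2)}_y\|$. *)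

theory Defs
  imports "HOL-Analysis.Analysis"
begin

definition reb_states :: "(real^3) set" where
  "reb_states = {s. s$3 = 1 \<and> (s$1)^2 + (s$2)^2 \<le> 1}"

text \<open>Linear functionals on R^3 are represented by vectors acting via the dot product.\<close>
definition is_effect :: "real^3 \<Rightarrow> bool" where
  "is_effect e \<longleftrightarrow> (\<forall>s\<in>reb_states. 0 \<le> e \<bullet> s \<and> e \<bullet> s \<le> 1)"

definition unit_eff :: "real^3" where
  "unit_eff = (\<chi> i. if i = 3 then 1 else 0)"

definition fnorm :: "real^3 \<Rightarrow> real" where
  "fnorm f = Sup ((\<lambda>s. \<bar>f \<bullet> s\<bar>) ` reb_states)"

definition dichotomic :: "(real^3) \<times> (real^3) \<Rightarrow> bool" where
  "dichotomic M \<longleftrightarrow> is_effect (fst M) \<and> is_effect (snd M) \<and> fst M + snd M = unit_eff"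

definition Pbar :: "(real^3) \<times> (real^3) \<Rightarrow> (real^3) \<times> (real^3) \<Rightarrow> real" where
  "Pbar M1 M2 = (1/8) * (fnorm (fst M1 + fst M2) + fnorm (fst M1 + snd M2)
                        + fnorm (snd M1 + fst M2) + fnorm (snd M1 + snd M2))"

end

theory Submission
  imports Defs
begin

lemma inner3: "(f::real^3) \<bullet> s = f$1* s$1 + f$2* s$2 + f$3* s$3"
  by (simp add: inner_vec_def sum_3)

lemma cs2:
  fixes a b x y :: real
  assumes "x^2+y^2 \<le> 1"
  shows "\<bar>a*x+b*y\<bar> \<le> sqrt(a^2+b^2)"
proof -
  have "(a*x+b*y)^2 \<le> (a^2+b^2)*(x^2+y^2)"
  proof -
    have "(a^2+b^2)*(x^2+y^2) - (a*x+b*y)^2 = (a*y-b*x)^2" by (simp add: power2_eq_square algebra_simps)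
    moreover have "(a*y-b*x)^2 \<ge> 0" by simp
    ultimately show ?thesis by linarith
  qed
  also have "\<dots> \<le> a^2+b^2" using assms
    by (simp add: mult_left_le)
  finally have "\<bar>a*x+b*y\<bar>^2 \<le> a^2+b^2" by simp
  thus ?thesis by (simp add: real_le_rsqrt)
qed

lemma fnorm_eq: "fnorm f = \<bar>f$3\<bar> + sqrt((f$1)^2+(f$2)^2)"
proof -
  define r where "r = sqrt((f$1)^2+(f$2)^2)"
  have r0: "r \<ge> 0" by (simp add: r_def)
  have ub: "\<bar>f \<bullet> s\<bar> \<le> \<bar>f$3\<bar> + r" if "s \<in> reb_states" for s
  proof -
    have s: "s$3 = 1" "(s$1)^2+(s$2)^2 \<le> 1" using that by (auto simp: reb_states_def)
    have "\<bar>f$1* s$1+f$2* s$2\<bar> \<le> r" unfolding r_def by (rule cs2[OF s(2)])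
    thus ?thesis using s(1) by (simp add: inner3)
  qed
  obtain s0 where s0: "s0 \<in> reb_states" "\<bar>f \<bullet> s0\<bar> = \<bar>f$3\<bar> + r"
  proof (cases "r = 0")
    case True
    have "(f$1)^2+(f$2)^2 = 0" using True unfolding r_def by simp
    hence "f$1 = 0" "f$2 = 0" by (simp_all add: sum_power2_eq_zero_iff)
    then show ?thesis using True
      by (intro that[of "vector [0,0,1]"]) (auto simp: reb_states_def inner3)
  next
    case False
    hence rp: "r > 0" using r0 by simp
    have rr: "r^2 = (f$1)^2+(f$2)^2" unfolding r_def by simp
    define g where "g = (if f$3 \<ge> 0 then 1 else -1::real)"
    have g2: "g^2 = 1" by (simp add: g_def)
    have mem: "vector [g*f$1/r, g*f$2/r, 1] \<in> reb_states"
      using rp rr g2 by (simp add: reb_states_def power_divide power_mult_distrib divide_simps)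
    have "f \<bullet> vector [g*f$1/r, g*f$2/r, 1] = g*((f$1)^2+(f$2)^2)/r + f$3"
      by (simp add: inner3 power2_eq_square divide_simps algebra_simps)
    also have "\<dots> = g*r + f$3" using rp rr by (simp add: power2_eq_square divide_simps) (simp add: algebra_simps)
    finally show ?thesis using rp
      by (intro that[OF mem]) (auto simp: g_def)
  qed
  have "fnorm f = \<bar>f$3\<bar> + r" unfolding fnorm_def
    by (rule cSup_eq_maximum) (use s0 ub in force)+
  thus ?thesis by (simp add: r_def)
qed

lemma eff_bound:
  assumes "is_effect e"
  shows "sqrt((e$1)^2+(e$2)^2) \<le> e$3 \<and> e$3 + sqrt((e$1)^2+(e$2)^2) \<le> 1"
proof -
  define r where "r = sqrt((e$1)^2+(e$2)^2)"
  have E: "0 \<le> e \<bullet> s \<and> e \<bullet> s \<le> 1" if "s \<in> reb_states" for s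
    using assms that unfolding is_effect_def by blast
  show ?thesis
  proof (cases "r = 0")
    case True
    have "vector [0,0,1] \<in> reb_states" by (simp add: reb_states_def)
    from E[OF this] show ?thesis using True unfolding r_def[symmetric] by (simp add: inner3)
  next
    case False
    moreover have "r \<ge> 0" unfolding r_def by simp
    ultimately have rp: "r > 0" by simp
    have rr: "r^2 = (e$1)^2+(e$2)^2" unfolding r_def by simp
    have key: "e \<bullet> vector [g*e$1/r, g*e$2/r, 1] = g*r + e$3 \<and> vector [g*e$1/r, g*e$2/r, 1] \<in> reb_states"
      if g2: "g^2 = 1" for g
    proof
      show "vector [g*e$1/r, g*e$2/r, 1] \<in> reb_states"
        using rp rr g2 by (simp add: reb_states_def power_divide power_mult_distrib divide_simps)
      have "e \<bullet> vector [g*e$1/r, g*e$2/r, 1] = g*((e$1)^2+(e$2)^2)/r + e$3"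
        by (simp add: inner3 power2_eq_square divide_simps algebra_simps)
      also have "\<dots> = g*r + e$3" using rp rr by (simp add: power2_eq_square divide_simps) (simp add: algebra_simps)
      finally show "e \<bullet> vector [g*e$1/r, g*e$2/r, 1] = g*r + e$3" .
    qed
    have "\<exists>s. e \<bullet> s = (-1)*r + e$3 \<and> s \<in> reb_states" using key[of "-1"] by (intro exI) simp
    then obtain s1 where s1: "e \<bullet> s1 = (-1)*r + e$3" "s1 \<in> reb_states" by blast
    have "\<exists>s. e \<bullet> s = 1*r + e$3 \<and> s \<in> reb_states" using key[of "1"] by (intro exI) simp
    then obtain s2 where s2: "e \<bullet> s2 = 1*r + e$3" "s2 \<in> reb_states" by blast
    have "0 \<le> -r + e$3" using E[OF s1(2)] s1(1) by simp
    moreover have "r + e$3 \<le> 1" using E[OF s2(2)] s2(1) by simp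
    ultimately show ?thesis unfolding r_def[symmetric] by simp
  qed
qed

lemma snd_comp:
  assumes "dichotomic M"
  shows "snd M $ 1 = - (fst M $ 1)" "snd M $ 2 = - (fst M $ 2)" "snd M $ 3 = 1 - fst M $ 3"
proof -
  have "fst M + snd M = unit_eff" using assms by (simp add: dichotomic_def)
  hence "\<And>i. snd M $ i = unit_eff $ i - fst M $ i" by (metis add_diff_cancel_left' vector_minus_component)
  thus "snd M $ 1 = - (fst M $ 1)" "snd M $ 2 = - (fst M $ 2)" "snd M $ 3 = 1 - fst M $ 3"
    by (simp_all add: unit_eff_def)
qed

lemma Pbar_formula:
  assumes d1: "dichotomic M1" and d2: "dichotomic M2"
  shows "Pbar M1 M2 = 1/2 + (sqrt((fst M1$1 + fst M2$1)^2 + (fst M1$2 + fst M2$2)^2)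
            + sqrt((fst M1$1 - fst M2$1)^2 + (fst M1$2 - fst M2$2)^2)) / 4"
proof -
  have b1: "sqrt((fst M1$1)^2+(fst M1$2)^2) \<le> fst M1$3 \<and> fst M1$3 + sqrt((fst M1$1)^2+(fst M1$2)^2) \<le> 1"
    using d1 eff_bound unfolding dichotomic_def by blast
  have b2: "sqrt((fst M2$1)^2+(fst M2$2)^2) \<le> fst M2$3 \<and> fst M2$3 + sqrt((fst M2$1)^2+(fst M2$2)^2) \<le> 1"
    using d2 eff_bound unfolding dichotomic_def by blast
  have p1: "0 \<le> sqrt((fst M1$1)^2+(fst M1$2)^2)" "0 \<le> sqrt((fst M2$1)^2+(fst M2$2)^2)" by simp_all
  have c: "0 \<le> fst M1$3" "fst M1$3 \<le> 1" "0 \<le> fst M2$3" "fst M2$3 \<le> 1" using b1 b2 p1 by linarith+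
  have sq: "(- x + y)^2 = (x - y)^2" "(x + - y)^2 = (x - y)^2" "(- x + - y)^2 = (x + y)^2" "(- x - y)^2 = (x + y)^2" for x y :: real
    by (simp_all add: power2_eq_square algebra_simps)
  show ?thesis
    unfolding Pbar_def fnorm_eq
    using c by (simp add: snd_comp[OF d1] snd_comp[OF d2] sq)
      (simp add: power2_commute[of "fst M2 $ 1"] power2_commute[of "fst M2 $ 2"] sq)
qed

lemma sqrt_sum_bound:
  fixes A B :: real
  assumes "A \<ge> 0" "B \<ge> 0" "A + B \<le> 1"
  shows "sqrt A + sqrt B \<le> sqrt 2"
proof -
  have "(sqrt A + sqrt B)^2 \<le> 2 * ((sqrt A)^2 + (sqrt B)^2)"
  proof -
    have "0 \<le> (sqrt A - sqrt B)^2" by simp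
    thus ?thesis by (simp add: power2_eq_square algebra_simps)
  qed
  also have "\<dots> \<le> 2" using assms by simp
  finally show ?thesis by (simp add: real_le_rsqrt)
qed

lemma half_form: "(1/2) * (1 + 1 / sqrt 2) = 1/2 + sqrt 2 / 4"
proof -
  have "1 / sqrt 2 = sqrt 2 / 2"
    by (simp add: divide_simps)
  thus ?thesis by simp
qed

lemma upper:
  assumes d1: "dichotomic M1" and d2: "dichotomic M2"
  shows "Pbar M1 M2 \<le> (1/2) * (1 + 1 / sqrt 2)"
proof -
  define v1 v2 w1 w2 where "v1 = fst M1$1" "v2 = fst M1$2" "w1 = fst M2$1" "w2 = fst M2$2"
  have b1: "sqrt(v1^2+v2^2) \<le> 1/2"
    using d1 eff_bound[of "fst M1"] unfolding dichotomic_def v1_v2_w1_w2_def by linarith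
  have b2: "sqrt(w1^2+w2^2) \<le> 1/2"
    using d2 eff_bound[of "fst M2"] unfolding dichotomic_def v1_v2_w1_w2_def by linarith
  have "v1^2+v2^2 \<le> 1/4"
  proof -
    have "(sqrt(v1^2+v2^2))^2 \<le> (1/2)^2" using b1 by (intro power_mono) simp_all
    thus ?thesis by (simp add: power2_eq_square)
  qed
  moreover have "w1^2+w2^2 \<le> 1/4"
  proof -
    have "(sqrt(w1^2+w2^2))^2 \<le> (1/2)^2" using b2 by (intro power_mono) simp_all
    thus ?thesis by (simp add: power2_eq_square)
  qed
  moreover have "((v1+w1)^2 + (v2+w2)^2) + ((v1-w1)^2 + (v2-w2)^2) = 2*(v1^2+v2^2) + 2*(w1^2+w2^2)"
    by (simp add: power2_eq_square algebra_simps)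
  ultimately have "sqrt((v1+w1)^2 + (v2+w2)^2) + sqrt((v1-w1)^2 + (v2-w2)^2) \<le> sqrt 2"
    by (intro sqrt_sum_bound) simp_all
  thus ?thesis unfolding Pbar_formula[OF d1 d2] half_form v1_v2_w1_w2_def by simp
qed

definition Ma :: "(real^3) \<times> (real^3)" where "Ma = (vector [1/2, 0, 1/2], vector [-1/2, 0, 1/2])"
definition Mb :: "(real^3) \<times> (real^3)" where "Mb = (vector [0, 1/2, 1/2], vector [0, -1/2, 1/2])"

lemma abs_le1: "s \<in> reb_states \<Longrightarrow> \<bar>s$1\<bar> \<le> 1 \<and> \<bar>s$2\<bar> \<le> 1 \<and> s$3 = 1"
proof -
  assume "s \<in> reb_states"
  hence h: "(s$1)^2 + (s$2)^2 \<le> 1" "s$3 = 1" by (auto simp: reb_states_def)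
  have "(s$1)^2 \<le> 1" "(s$2)^2 \<le> 1" using h(1) zero_le_power2[of "s$1"] zero_le_power2[of "s$2"] by linarith+
  thus ?thesis using h(2) abs_square_le_1 by blast
qed

lemma eff_gen:
  assumes "a^2 \<le> 1/4" "b^2 \<le> 1/4" "a = 0 \<or> b = 0"
  shows "is_effect (vector [a, b, 1/2])"
  unfolding is_effect_def
proof
  fix s assume "s \<in> reb_states"
  from abs_le1[OF this] have h: "\<bar>s$1\<bar> \<le> 1" "\<bar>s$2\<bar> \<le> 1" "s$3 = 1" by auto
  have q: "(1/4::real) = (1/2)^2" by (simp add: power2_eq_square)
  have "\<bar>a\<bar> \<le> \<bar>1/2\<bar>" "\<bar>b\<bar> \<le> \<bar>1/2\<bar>" using assms(1,2) unfolding q abs_le_square_iff by simp_all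
  hence ab: "\<bar>a\<bar> \<le> 1/2" "\<bar>b\<bar> \<le> 1/2" by simp_all
  have "\<bar>a\<bar> * \<bar>s$1\<bar> \<le> 1/2 * 1" by (rule mult_mono) (use ab h in auto)
  moreover have "\<bar>b\<bar> * \<bar>s$2\<bar> \<le> 1/2 * 1" by (rule mult_mono) (use ab h in auto)
  ultimately have "\<bar>a * s$1\<bar> \<le> 1/2" "\<bar>b * s$2\<bar> \<le> 1/2" by (simp_all add: abs_mult)
  thus "0 \<le> vector [a, b, 1/2] \<bullet> s \<and> vector [a, b, 1/2] \<bullet> s \<le> 1"
    using h(3) assms(3) by (auto simp: inner3)
qed

lemma Ma_dich: "dichotomic Ma"
  unfolding dichotomic_def Ma_def
  using eff_gen[of "1/2" 0] eff_gen[of "-1/2" 0]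
  by (simp add: unit_eff_def vec_eq_iff forall_3 power2_eq_square)

lemma Mb_dich: "dichotomic Mb"
  unfolding dichotomic_def Mb_def
  using eff_gen[of 0 "1/2"] eff_gen[of 0 "-1/2"]
  by (simp add: unit_eff_def vec_eq_iff forall_3 power2_eq_square)

lemma attain: "Pbar Ma Mb = (1/2) * (1 + 1 / sqrt 2)"
proof -
  have e: "sqrt (1/2) = sqrt 2 / 2"
    by (simp add: real_sqrt_divide divide_simps)
  have "((1/2::real) + 0)^2 + (0 + 1/2)^2 = 1/2" "((1/2::real) - 0)^2 + (0 - 1/2)^2 = 1/2"
    by (simp_all add: power2_eq_square)
  hence "Pbar Ma Mb = 1/2 + (sqrt (1/2) + sqrt (1/2)) / 4"
    unfolding Pbar_formula[OF Ma_dich Mb_dich] by (simp only: Ma_def Mb_def fst_conv vector_3)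
  thus ?thesis unfolding half_form e by simp
qed

theorem mainTheorem14:
  shows "Sup {Pbar M1 M2 | M1 M2. dichotomic M1 \<and> dichotomic M2} = (1/2) * (1 + 1 / sqrt 2)
         \<and> (\<exists>M1 M2. dichotomic M1 \<and> dichotomic M2 \<and> Pbar M1 M2 = (1/2) * (1 + 1 / sqrt 2))"
proof
  show "Sup {Pbar M1 M2 | M1 M2. dichotomic M1 \<and> dichotomic M2} = (1/2) * (1 + 1 / sqrt 2)"
  proof (rule cSup_eq_maximum)
    show "(1/2) * (1 + 1 / sqrt 2) \<in> {Pbar M1 M2 | M1 M2. dichotomic M1 \<and> dichotomic M2}"
      using Ma_dich Mb_dich attain[symmetric] by blast
    show "x \<le> (1/2) * (1 + 1 / sqrt 2)" if "x \<in> {Pbar M1 M2 | M1 M2. dichotomic M1 \<and> dichotomic M2}" for x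
      using that upper by blast
  qed
  show "\<exists>M1 M2. dichotomic M1 \<and> dichotomic M2 \<and> Pbar M1 M2 = (1/2) * (1 + 1 / sqrt 2)"
    using Ma_dich Mb_dich attain by blast
qed

end
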